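(* Let $P$ and $Q$ be irreducible transition matrices on the finite set $S$, both reversible with respect to $\pi$. Then $P$ efficiency-dominates $Q$ if and only if the matrix $Q-P$ has all eigenvalues non-negative, which holds if and only if the matrix $D(Q-P)$ has all eigenvalues non-negative, where $D=\mathrm{diag}(\pi)$.
   Context: $S$ is a finite set with $|S|=n$, identified with $\{1,\dots,n\}$, and $\pi$ is a probability distribution on $S$ with $\pi(x)>0$ for all $x$; $D=\mathrm{diag}(\pi(1),\dots,\pi(n))$. A transition matrix $P$ (nonnegative entries, rows summing to 1) acts on functions by $(Pf)(x)=\sum_y P(x,y)f(y)$. $P$ is reversible with respect to $\pi$ if $\pi(x)P(x,y)=\pi(y)P(y,x)$ for all $x,y$; irreducible if every state can be reached from every other with positive probability in some number of steps. For a Markov chain $X_1,X_2,\dots$ with transition matrix $P$ and $X_1\sim\pi$, $v(f,P)=\lim_{N\to\infty}\frac1N\mathrm{Var}\big(\sum_{i=1}^N f(X_i)\big)$. $P$ efficiency-dominates $Q$ if $v(f,P)\le v(f,Q)$ for all $f:S\to\mathbb R$. *)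

theory Defs
  imports "HOL-Analysis.Analysis"
begin

text \<open>States: a finite type 'n (identified with {1..n}). Matrices are real^'n^'n,
  with A $ x $ y the (x,y) entry.\<close>

primrec mpow :: "real^'n^'n \<Rightarrow> nat \<Rightarrow> real^'n^'n" where
  "mpow A 0 = mat 1"
| "mpow A (Suc k) = mpow A k ** A"

definition prob_dist :: "('n::finite \<Rightarrow> real) \<Rightarrow> bool" where
  "prob_dist \<pi> \<longleftrightarrow> (\<forall>x. \<pi> x > 0) \<and> (\<Sum>x\<in>UNIV. \<pi> x) = 1"

definition transition_matrix :: "real^'n::finite^'n \<Rightarrow> bool" where
  "transition_matrix P \<longleftrightarrow> (\<forall>x y. P $ x $ y \<ge> 0) \<and> (\<forall>x. (\<Sum>y\<in>UNIV. P $ x $ y) = 1)"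

definition reversible :: "real^'n::finite^'n \<Rightarrow> ('n \<Rightarrow> real) \<Rightarrow> bool" where
  "reversible P \<pi> \<longleftrightarrow> (\<forall>x y. \<pi> x * P $ x $ y = \<pi> y * P $ y $ x)"

definition irreducible_tm :: "real^'n::finite^'n \<Rightarrow> bool" where
  "irreducible_tm P \<longleftrightarrow> (\<forall>x y. \<exists>k. mpow P k $ x $ y > 0)"

text \<open>Law of the path (X_1,...,X_N) of the stationary chain, paths indexed by 0..N-1.\<close>
definition path_prob :: "real^'n::finite^'n \<Rightarrow> ('n \<Rightarrow> real) \<Rightarrow> nat \<Rightarrow> (nat \<Rightarrow> 'n) \<Rightarrow> real" where
  "path_prob P \<pi> N \<omega> = \<pi> (\<omega> 0) * (\<Prod>k<N - 1. P $ (\<omega> k) $ (\<omega> (Suc k)))"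

definition paths :: "nat \<Rightarrow> (nat \<Rightarrow> 'n::finite) set" where
  "paths N = {..<N} \<rightarrow>\<^sub>E UNIV"

definition partial_sum_var :: "('n::finite \<Rightarrow> real) \<Rightarrow> real^'n^'n \<Rightarrow> ('n \<Rightarrow> real) \<Rightarrow> nat \<Rightarrow> real" where
  "partial_sum_var f P \<pi> N =
     (\<Sum>\<omega>\<in>paths N. path_prob P \<pi> N \<omega> * (\<Sum>i<N. f (\<omega> i))^2)
     - (\<Sum>\<omega>\<in>paths N. path_prob P \<pi> N \<omega> * (\<Sum>i<N. f (\<omega> i)))^2"

definition asym_var :: "('n::finite \<Rightarrow> real) \<Rightarrow> real^'n^'n \<Rightarrow> ('n \<Rightarrow> real) \<Rightarrow> real" where
  "asym_var f P \<pi> = lim (\<lambda>N. partial_sum_var f P \<pi> N / real N)"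

definition efficiency_dominates :: "real^'n::finite^'n \<Rightarrow> real^'n^'n \<Rightarrow> ('n \<Rightarrow> real) \<Rightarrow> bool" where
  "efficiency_dominates P Q \<pi> \<longleftrightarrow> (\<forall>f. asym_var f P \<pi> \<le> asym_var f Q \<pi>)"

definition cmat :: "real^'n^'m \<Rightarrow> complex^'n^'m" where
  "cmat A = (\<chi> i j. complex_of_real (A $ i $ j))"

definition is_eigenvalue :: "real^'n::finite^'n \<Rightarrow> complex \<Rightarrow> bool" where
  "is_eigenvalue A c \<longleftrightarrow> (\<exists>v. v \<noteq> 0 \<and> cmat A *v v = c *s v)"

definition eigenvalues_nonneg :: "real^'n::finite^'n \<Rightarrow> bool" where
  "eigenvalues_nonneg A \<longleftrightarrow> (\<forall>c. is_eigenvalue A c \<longrightarrow> c \<in> \<real> \<and> Re c \<ge> 0)"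

definition diag_mat :: "('n::finite \<Rightarrow> real) \<Rightarrow> real^'n^'n" where
  "diag_mat \<pi> = (\<chi> i j. if i = j then \<pi> i else 0)"

end

theory Submission
  imports Defs
begin

definition ip :: "('n::finite \<Rightarrow> real) \<Rightarrow> real^'n \<Rightarrow> real^'n \<Rightarrow> real" where
  "ip w u v = (\<Sum>x\<in>UNIV. w x * u$x * v$x)"

definition cv :: "real \<Rightarrow> real^'n::finite" where "cv c = (\<chi> x. c)"

lemma cv_nth[simp]: "cv c $ x = c" by (simp add: cv_def)

lemma ip_sym: "ip w u v = ip w v u" unfolding ip_def by (simp add: ac_simps)
lemma ip_diff_left: "ip w (a - b) c = ip w a c - ip w b c"
  unfolding ip_def by (simp add: algebra_simps sum_subtractf)
lemma ip_diff_right: "ip w c (a - b) = ip w c a - ip w c b"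
  unfolding ip_def by (simp add: algebra_simps sum_subtractf)
lemma ip_add_left: "ip w (a + b) c = ip w a c + ip w b c"
  unfolding ip_def by (simp add: algebra_simps sum.distrib)
lemma ip_add_right: "ip w c (a + b) = ip w c a + ip w c b"
  unfolding ip_def by (simp add: algebra_simps sum.distrib)
lemma ip_scale_left: "ip w (t *\<^sub>R a) c = t * ip w a c"
  unfolding ip_def by (simp add: algebra_simps sum_distrib_left)
lemma ip_scale_right: "ip w c (t *\<^sub>R a) = t * ip w c a"
  unfolding ip_def by (simp add: algebra_simps sum_distrib_left)

lemma mpow_Suc': "mpow A (Suc k) *v v = mpow A k *v (A *v v)"
  by (simp add: matrix_vector_mul_assoc)

lemma mpow_one: "mpow A (Suc 0) = A" by simp

locale revmc =
  fixes P :: "real^'n::finite^'n" and \<pi> :: "'n \<Rightarrow> real"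
  assumes pd: "prob_dist \<pi>" and tm: "transition_matrix P" and rv: "reversible P \<pi>"
begin

lemma pi_pos: "\<pi> x > 0" using pd by (simp add: prob_dist_def)
lemma pi_sum: "(\<Sum>x\<in>UNIV. \<pi> x) = 1" using pd by (simp add: prob_dist_def)
lemma P_nonneg: "P$x$y \<ge> 0" using tm by (simp add: transition_matrix_def)
lemma P_rows: "(\<Sum>y\<in>UNIV. P$x$y) = 1" using tm by (simp add: transition_matrix_def)
lemma P_rev: "\<pi> x * P$x$y = \<pi> y * P$y$x" using rv by (simp add: reversible_def)

lemma stat: "(\<Sum>x\<in>UNIV. \<pi> x * P$x$y) = \<pi> y"
proof -
  have "(\<Sum>x\<in>UNIV. \<pi> x * P$x$y) = (\<Sum>x\<in>UNIV. \<pi> y * P$y$x)" using P_rev by simp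
  also have "\<dots> = \<pi> y * (\<Sum>x\<in>UNIV. P$y$x)" by (simp add: sum_distrib_left)
  finally show ?thesis by (simp add: P_rows)
qed

lemma mpow_nonneg: "mpow P k $x$y \<ge> 0"
proof (induction k arbitrary: x y)
  case 0 then show ?case by (simp add: mat_def)
next
  case (Suc k) then show ?case
    by (auto simp: matrix_matrix_mult_def intro!: sum_nonneg mult_nonneg_nonneg P_nonneg)
qed

lemma mpow_rows: "(\<Sum>y\<in>UNIV. mpow P k $x$y) = 1"
proof (induction k arbitrary: x)
  case 0 then show ?case by (simp add: mat_def)
next
  case (Suc k)
  have "(\<Sum>y\<in>UNIV. mpow P (Suc k) $x$y) = (\<Sum>y\<in>UNIV. \<Sum>z\<in>UNIV. mpow P k $x$z * P$z$y)"
    by (simp add: matrix_matrix_mult_def)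
  also have "\<dots> = (\<Sum>z\<in>UNIV. mpow P k $x$z * (\<Sum>y\<in>UNIV. P$z$y))"
    by (subst sum.swap) (simp add: sum_distrib_left)
  also have "\<dots> = 1" using Suc by (simp add: P_rows)
  finally show ?case .
qed

lemma mpow_le1: "mpow P k $x$y \<le> 1"
proof -
  have "mpow P k $x$y \<le> (\<Sum>z\<in>UNIV. mpow P k $x$z)"
    by (rule member_le_sum) (auto simp: mpow_nonneg)
  then show ?thesis by (simp add: mpow_rows)
qed

lemma mpow_stat: "(\<Sum>x\<in>UNIV. \<pi> x * mpow P k $x$y) = \<pi> y"
proof (induction k arbitrary: y)
  case 0 then show ?case by (simp add: mat_def if_distrib cong: if_cong)
next
  case (Suc k)
  have "(\<Sum>x\<in>UNIV. \<pi> x * mpow P (Suc k) $x$y) = (\<Sum>x\<in>UNIV. \<Sum>z\<in>UNIV. \<pi> x * mpow P k $x$z * P$z$y)"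
    by (simp add: matrix_matrix_mult_def sum_distrib_left mult.assoc)
  also have "\<dots> = (\<Sum>z\<in>UNIV. (\<Sum>x\<in>UNIV. \<pi> x * mpow P k $x$z) * P$z$y)"
    by (subst sum.swap) (simp add: sum_distrib_right)
  also have "\<dots> = \<pi> y" using Suc by (simp add: stat)
  finally show ?case .
qed

lemma ip_one_mpow: "ip \<pi> (cv 1) (mpow P k *v v) = ip \<pi> (cv 1) v"
proof -
  have "ip \<pi> (cv 1) (mpow P k *v v) = (\<Sum>x\<in>UNIV. \<Sum>y\<in>UNIV. \<pi> x * mpow P k $x$y * v$y)"
    by (simp add: ip_def matrix_vector_mult_def sum_distrib_left mult.assoc)
  also have "\<dots> = (\<Sum>y\<in>UNIV. (\<Sum>x\<in>UNIV. \<pi> x * mpow P k $x$y) * v$y)"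
    by (subst sum.swap) (simp add: sum_distrib_right)
  also have "\<dots> = ip \<pi> (cv 1) v" by (simp add: mpow_stat ip_def)
  finally show ?thesis .
qed

lemma ip_one_P: "ip \<pi> (cv 1) (P *v v) = ip \<pi> (cv 1) v"
  using ip_one_mpow[of "Suc 0" v] by simp

lemma mpow_cv: "mpow P k *v cv c = cv c"
  by (simp add: vec_eq_iff matrix_vector_mult_def sum_distrib_right[symmetric] mpow_rows)

lemma P_cv: "P *v cv c = cv c"
  using mpow_cv[of "Suc 0"] by simp

lemma ip_P_sym: "ip \<pi> u (P *v v) = ip \<pi> (P *v u) v"
proof -
  have "ip \<pi> u (P *v v) = (\<Sum>x\<in>UNIV. \<Sum>y\<in>UNIV. (\<pi> x * P$x$y) * u$x * v$y)"
    by (simp add: ip_def matrix_vector_mult_def sum_distrib_left ac_simps)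
  also have "\<dots> = (\<Sum>x\<in>UNIV. \<Sum>y\<in>UNIV. (\<pi> y * P$y$x) * u$x * v$y)"
    by (simp add: P_rev)
  also have "\<dots> = ip \<pi> (P *v u) v"
    by (subst sum.swap) (simp add: ip_def matrix_vector_mult_def sum_distrib_left sum_distrib_right ac_simps)
  finally show ?thesis .
qed

lemma ip_P_le: "ip \<pi> u (P *v u) \<le> ip \<pi> u u"
proof -
  have "ip \<pi> u (P *v u) = (\<Sum>x\<in>UNIV. \<Sum>y\<in>UNIV. (\<pi> x * P$x$y) * (u$x * u$y))"
    by (simp add: ip_def matrix_vector_mult_def sum_distrib_left ac_simps)
  also have "\<dots> \<le> (\<Sum>x\<in>UNIV. \<Sum>y\<in>UNIV. (\<pi> x * P$x$y) * (((u$x)^2 + (u$y)^2)/2))"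
  proof (intro sum_mono mult_left_mono)
    fix x y
    show "u$x * u$y \<le> ((u$x)^2 + (u$y)^2)/2" using sum_squares_bound[of "u$x" "u$y"] 
      by (simp add: power2_eq_square)
    show "0 \<le> \<pi> x * P$x$y" using pi_pos[of x] P_nonneg[of x y] by simp
  qed
  also have "\<dots> = (\<Sum>x\<in>UNIV. \<Sum>y\<in>UNIV. (\<pi> x * P$x$y) * (u$x)^2)/2
                 + (\<Sum>x\<in>UNIV. \<Sum>y\<in>UNIV. (\<pi> x * P$x$y) * (u$y)^2)/2"
    by (simp add: sum_divide_distrib sum.distrib[symmetric] add_divide_distrib[symmetric] distrib_left)
  also have "(\<Sum>x\<in>UNIV. \<Sum>y\<in>UNIV. (\<pi> x * P$x$y) * (u$x)^2) = ip \<pi> u u"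
    by (simp add: ip_def sum_distrib_right[symmetric] sum_distrib_left[symmetric] P_rows power2_eq_square mult.assoc)
  also have "(\<Sum>x\<in>UNIV. \<Sum>y\<in>UNIV. (\<pi> x * P$x$y) * (u$y)^2) = ip \<pi> u u"
    by (subst sum.swap) (simp add: ip_def sum_distrib_right[symmetric] stat power2_eq_square mult.assoc[symmetric])
  finally show ?thesis by simp
qed

end

lemma paths_0: "paths 0 = {\<lambda>_. undefined}"
  by (simp add: paths_def)

lemma sum_paths_Suc:
  "(\<Sum>s\<in>paths (Suc N). G s) = (\<Sum>s\<in>paths N. \<Sum>y\<in>UNIV. G (s(N := y)))"
proof -
  have e: "paths (Suc N) = (\<lambda>(y, g). g(N := y)) ` (UNIV \<times> paths N)"
    unfolding paths_def lessThan_Suc by (rule PiE_insert_eq)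
  have i: "inj_on (\<lambda>(y, g). g(N := y)) (UNIV \<times> paths N)"
    unfolding paths_def using inj_combinator[of N "{..<N}" "\<lambda>_. UNIV"] by simp
  have "(\<Sum>s\<in>paths (Suc N). G s) = (\<Sum>p\<in>UNIV \<times> paths N. G ((\<lambda>(y, g). g(N := y)) p))"
    unfolding e by (subst sum.reindex[OF i]) (simp add: comp_def)
  also have "\<dots> = (\<Sum>y\<in>UNIV. \<Sum>s\<in>paths N. G (s(N := y)))"
    by (simp add: sum.cartesian_product split_beta)
  also have "\<dots> = (\<Sum>s\<in>paths N. \<Sum>y\<in>UNIV. G (s(N := y)))"
    by (rule sum.swap)
  finally show ?thesis .
qed

context revmc begin

abbreviation "pp \<equiv> path_prob P \<pi>"

lemma pp_upd:
  assumes "N \<ge> 1"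
  shows "pp (Suc N) (s(N := y)) = pp N s * P $ (s (N - 1)) $ y"
proof -
  obtain M where M: "N = Suc M" using assms by (cases N) auto
  have "(\<Prod>k<N. P $ ((s(N := y)) k) $ ((s(N := y)) (Suc k)))
        = (\<Prod>k<M. P $ (s k) $ (s (Suc k))) * P $ (s M) $ y"
    unfolding M by (simp add: prod.lessThan_Suc)
  then show ?thesis using M by (simp add: path_prob_def)
qed

lemma lemA:
  assumes "N \<ge> 1"
  shows "(\<Sum>s\<in>paths (Suc N). pp (Suc N) s * G s)
       = (\<Sum>s\<in>paths N. pp N s * (\<Sum>y\<in>UNIV. P $ (s (N - 1)) $ y * G (s(N := y))))"
  by (simp add: sum_paths_Suc pp_upd[OF assms] sum_distrib_left ac_simps)

lemma reduce:
  assumes "1 \<le> M" "M \<le> N" and G: "\<And>s s'. (\<And>k. k < M \<Longrightarrow> s k = s' k) \<Longrightarrow> G s = G s'"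
  shows "(\<Sum>s\<in>paths N. pp N s * G s) = (\<Sum>s\<in>paths M. pp M s * G s)"
  using assms(2)
proof (induction N rule: dec_induct)
  case base then show ?case by simp
next
  case (step N)
  have "(\<Sum>s\<in>paths (Suc N). pp (Suc N) s * G s)
       = (\<Sum>s\<in>paths N. pp N s * (\<Sum>y\<in>UNIV. P $ (s (N - 1)) $ y * G (s(N := y))))"
    using step assms(1) by (intro lemA) simp
  also have "\<dots> = (\<Sum>s\<in>paths N. pp N s * G s)"
  proof (intro sum.cong refl arg_cong2[where f="(*)"])
    fix s
    have "(\<Sum>y\<in>UNIV. P $ (s (N - 1)) $ y * G (s(N := y))) = (\<Sum>y\<in>UNIV. P $ (s (N - 1)) $ y * G s)"
      using step(1) by (intro sum.cong refl arg_cong2[where f="(*)"] G) auto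
    also have "\<dots> = G s" by (simp add: sum_distrib_right[symmetric] P_rows)
    finally show "(\<Sum>y\<in>UNIV. P $ (s (N - 1)) $ y * G (s(N := y))) = G s" .
  qed
  finally show ?case using step by simp
qed

lemma lemB:
  assumes "i < N"
  shows "(\<Sum>s\<in>paths N. pp N s * (u $ (s i) * v $ (s (N - 1))))
       = (\<Sum>s\<in>paths (Suc i). pp (Suc i) s * (u $ (s i) * (mpow P (N - 1 - i) *v v) $ (s i)))"
  using Suc_leI[OF assms]
proof (induction N arbitrary: v rule: dec_induct)
  case base then show ?case by simp
next
  case (step N)
  have "(\<Sum>s\<in>paths (Suc N). pp (Suc N) s * (u $ (s i) * v $ (s (Suc N - 1))))
     = (\<Sum>s\<in>paths N. pp N s * (\<Sum>y\<in>UNIV. P $ (s (N - 1)) $ y * (u $ ((s(N:=y)) i) * v $ ((s(N:=y)) (Suc N - 1)))))"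
    using step by (intro lemA) simp
  also have "\<dots> = (\<Sum>s\<in>paths N. pp N s * (u $ (s i) * (P *v v) $ (s (N - 1))))"
    using step(1) by (intro sum.cong refl arg_cong2[where f="(*)"])
      (simp add: matrix_vector_mult_def sum_distrib_left ac_simps)
  also have "\<dots> = (\<Sum>s\<in>paths (Suc i). pp (Suc i) s * (u $ (s i) * (mpow P (N - 1 - i) *v (P *v v)) $ (s i)))"
    using step by simp
  also have "mpow P (N - 1 - i) *v (P *v v) = mpow P (Suc N - 1 - i) *v v"
  proof -
    have "Suc N - 1 - i = Suc (N - 1 - i)" using step(1) by simp
    then show ?thesis by (simp only: mpow_Suc')
  qed
  finally show ?case .
qed

lemma lemC:
  assumes "1 \<le> N"
  shows "(\<Sum>s\<in>paths N. pp N s * w $ (s (N - 1))) = (\<Sum>x\<in>UNIV. \<pi> x * w $ x)"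
  using assms
proof (induction N arbitrary: w rule: dec_induct)
  case base
  show ?case by (simp add: sum_paths_Suc[where N=0] paths_0 path_prob_def)
next
  case (step N)
  have "(\<Sum>s\<in>paths (Suc N). pp (Suc N) s * w $ (s (Suc N - 1)))
     = (\<Sum>s\<in>paths N. pp N s * (\<Sum>y\<in>UNIV. P $ (s (N - 1)) $ y * w $ ((s(N:=y)) (Suc N - 1))))"
    using step by (intro lemA) simp
  also have "\<dots> = (\<Sum>s\<in>paths N. pp N s * (P *v w) $ (s (N - 1)))"
    by (simp add: matrix_vector_mult_def)
  also have "\<dots> = (\<Sum>x\<in>UNIV. \<pi> x * (P *v w) $ x)" by (rule step.IH)
  also have "\<dots> = (\<Sum>x\<in>UNIV. \<pi> x * w $ x)"
    using ip_one_P[of w] by (simp add: ip_def)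
  finally show ?case .
qed

lemma pair_exp:
  assumes "i \<le> j" "j < N"
  shows "(\<Sum>s\<in>paths N. pp N s * (u $ (s i) * v $ (s j))) = ip \<pi> u (mpow P (j - i) *v v)"
proof -
  have "(\<Sum>s\<in>paths N. pp N s * (u $ (s i) * v $ (s j)))
      = (\<Sum>s\<in>paths (Suc j). pp (Suc j) s * (u $ (s i) * v $ (s (Suc j - 1))))"
    using assms by (subst reduce[where M="Suc j"]) auto
  also have "\<dots> = (\<Sum>s\<in>paths (Suc i). pp (Suc i) s * (u $ (s i) * (mpow P (j - i) *v v) $ (s i)))"
    using assms by (subst lemB) auto
  also have "\<dots> = (\<Sum>s\<in>paths (Suc i). pp (Suc i) s * (\<chi> x. u $ x * (mpow P (j - i) *v v) $ x) $ (s (Suc i - 1)))"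
    by simp
  also have "\<dots> = ip \<pi> u (mpow P (j - i) *v v)"
    by (subst lemC) (auto simp: ip_def mult.assoc)
  finally show ?thesis .
qed

end

definition dd :: "nat \<Rightarrow> nat \<Rightarrow> nat" where "dd i j = (if i \<le> j then j - i else i - j)"

context revmc begin

lemma pair_exp2:
  assumes "i < N" "j < N"
  shows "(\<Sum>s\<in>paths N. pp N s * (u $ (s i) * u $ (s j))) = ip \<pi> u (mpow P (dd i j) *v u)"
proof (cases "i \<le> j")
  case True then show ?thesis using assms pair_exp[of i j N u u] by (simp add: dd_def)
next
  case False
  then have "(\<Sum>s\<in>paths N. pp N s * (u $ (s i) * u $ (s j))) = (\<Sum>s\<in>paths N. pp N s * (u $ (s j) * u $ (s i)))"
    by (simp add: mult.commute)
  also have "\<dots> = ip \<pi> u (mpow P (i - j) *v u)" using False assms by (intro pair_exp) auto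
  finally show ?thesis using False by (simp add: dd_def)
qed

lemma psv_formula:
  fixes f :: "'n \<Rightarrow> real"
  defines "m \<equiv> (\<Sum>x\<in>UNIV. \<pi> x * f x)"
  defines "g \<equiv> (\<chi> x. f x) - cv m"
  shows "partial_sum_var f P \<pi> N = (\<Sum>i<N. \<Sum>j<N. ip \<pi> g (mpow P (dd i j) *v g))"
proof (cases "N = 0")
  case True then show ?thesis by (simp add: partial_sum_var_def paths_0)
next
  case False
  define fv :: "real^'n" where "fv = (\<chi> x. f x)"
  have fvs: "f (s i) = fv $ (s i)" for s i by (simp add: fv_def)
  have "(\<Sum>s\<in>paths N. pp N s * (\<Sum>i<N. f (s i))^2)
      = (\<Sum>s\<in>paths N. \<Sum>i<N. \<Sum>j<N. pp N s * (fv $ (s i) * fv $ (s j)))"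
    by (simp add: fvs power2_eq_square sum_product sum_distrib_left sum_distrib_right ac_simps)
  also have "\<dots> = (\<Sum>i<N. \<Sum>j<N. \<Sum>s\<in>paths N. pp N s * (fv $ (s i) * fv $ (s j)))"
    by (simp add: sum.swap[of _ "paths N"])
  also have "\<dots> = (\<Sum>i<N. \<Sum>j<N. ip \<pi> fv (mpow P (dd i j) *v fv))"
    by (intro sum.cong refl pair_exp2) auto
  finally have S2: "(\<Sum>s\<in>paths N. pp N s * (\<Sum>i<N. f (s i))^2) = (\<Sum>i<N. \<Sum>j<N. ip \<pi> fv (mpow P (dd i j) *v fv))" .
  have "(\<Sum>s\<in>paths N. pp N s * (\<Sum>i<N. f (s i)))
      = (\<Sum>i<N. \<Sum>s\<in>paths N. pp N s * (fv $ (s i) * cv 1 $ (s i)))"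
    by (simp add: fvs sum_distrib_left sum.swap[of _ "paths N"])
  also have "\<dots> = (\<Sum>i<N. ip \<pi> fv (mpow P (i - i) *v cv 1))"
    by (intro sum.cong refl pair_exp) auto
  also have "\<dots> = N * m"
    by (simp add: mpow_cv ip_def m_def fv_def)
  finally have S1: "(\<Sum>s\<in>paths N. pp N s * (\<Sum>i<N. f (s i))) = N * m" .
  have fvg: "fv = g + cv m" by (simp add: g_def fv_def)
  have c: "ip \<pi> fv (mpow P k *v fv) = ip \<pi> g (mpow P k *v g) + m^2" for k
  proof -
    have "ip \<pi> fv (mpow P k *v fv) = ip \<pi> (g + cv m) (mpow P k *v g + cv m)"
      by (simp add: fvg matrix_vector_right_distrib mpow_cv)
    also have "\<dots> = ip \<pi> g (mpow P k *v g) + ip \<pi> g (cv m) + ip \<pi> (cv m) (mpow P k *v g) + ip \<pi> (cv m) (cv m)"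
      by (simp add: ip_add_left ip_add_right)
    also have "ip \<pi> (cv m) (mpow P k *v g) = m * ip \<pi> (cv 1) (mpow P k *v g)"
      by (simp add: ip_def sum_distrib_left ac_simps)
    also have "ip \<pi> (cv 1) (mpow P k *v g) = ip \<pi> (cv 1) g" by (rule ip_one_mpow)
    also have "ip \<pi> (cv 1) g = 0"
      by (simp add: ip_def g_def m_def algebra_simps sum_subtractf sum_distrib_right[symmetric] pi_sum)
    also have "ip \<pi> g (cv m) = m * ip \<pi> (cv 1) g"
      by (simp add: ip_def sum_distrib_left ac_simps)
    also have "ip \<pi> (cv 1) g = 0"
      by (simp add: ip_def g_def m_def algebra_simps sum_subtractf sum_distrib_right[symmetric] pi_sum)
    also have "ip \<pi> (cv m) (cv m) = m^2"
      by (simp add: ip_def sum_distrib_right[symmetric] pi_sum power2_eq_square)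
    finally show ?thesis by simp
  qed
  show ?thesis
    unfolding partial_sum_var_def S1 S2 c
    by (simp add: sum.distrib power2_eq_square)
qed

end

context revmc begin

lemma cv_0[simp]: "cv 0 = 0" by (simp add: vec_eq_iff)

lemma ip_cv_right: "ip \<pi> u (cv c) = c * (\<Sum>x\<in>UNIV. \<pi> x * u $ x)"
  by (simp add: ip_def sum_distrib_left ac_simps)
lemma ip_cv_left: "ip \<pi> (cv c) u = c * (\<Sum>x\<in>UNIV. \<pi> x * u $ x)"
  by (simp add: ip_def sum_distrib_left ac_simps)
lemma ip_one_one: "ip \<pi> (cv 1) (cv 1) = 1"
  by (simp add: ip_def pi_sum)

lemma mpow_fix: "P *v h = h \<Longrightarrow> mpow P k *v h = h"
  by (induction k) (simp_all add: matrix_vector_mul_assoc[symmetric])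

lemma harmonic_const:
  assumes irr: "irreducible_tm P" and h: "P *v h = h"
  shows "h = cv (h $ x0')"
proof -
  define M where "M = Max (range (\<lambda>x. h $ x))"
  have "M \<in> range (\<lambda>x. h $ x)" unfolding M_def by (rule Max_in) auto
  then obtain x0 where x0: "h $ x0 = M" by auto
  have le: "h $ x \<le> h $ x0" for x unfolding x0 M_def by (rule Max_ge) auto
  have all: "h $ y = h $ x0" for y
  proof -
    obtain k where k: "mpow P k $ x0 $ y > 0" using irr by (auto simp: irreducible_tm_def)
    have "h $ x0 = (mpow P k *v h) $ x0" using mpow_fix[OF h, of k] by simp
    also have "\<dots> = (\<Sum>z\<in>UNIV. mpow P k $ x0 $ z * h $ z)"
      by (simp add: matrix_vector_mult_def)
    finally have "h $ x0 = (\<Sum>z\<in>UNIV. mpow P k $ x0 $ z * h $ z)" .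
    moreover have "h $ x0 = (\<Sum>z\<in>UNIV. mpow P k $ x0 $ z * h $ x0)"
      by (simp add: sum_distrib_right[symmetric] mpow_rows)
    ultimately have "(\<Sum>z\<in>UNIV. mpow P k $ x0 $ z * (h $ x0 - h $ z)) = 0"
      by (simp add: algebra_simps sum_subtractf)
    moreover have "\<forall>z\<in>UNIV. 0 \<le> mpow P k $ x0 $ z * (h $ x0 - h $ z)"
      using le mpow_nonneg by simp
    ultimately have "mpow P k $ x0 $ y * (h $ x0 - h $ y) = 0"
      by (subst (asm) sum_nonneg_eq_0_iff) auto
    then show ?thesis using k by simp
  qed
  then show ?thesis unfolding vec_eq_iff cv_nth by metis
qed

definition Bm :: "real^'n^'n" where "Bm = (\<chi> x y. \<pi> y)"

lemma Bm_mult: "Bm *v h = cv (ip \<pi> (cv 1) h)"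
  by (simp add: Bm_def vec_eq_iff matrix_vector_mult_def ip_def)

lemma poisson:
  assumes irr: "irreducible_tm P" and g: "ip \<pi> (cv 1) g = 0"
  shows "\<exists>h. h - P *v h = g \<and> ip \<pi> (cv 1) h = 0"
proof -
  define L where "L = mat 1 - P + Bm"
  have L: "L *v h = h - P *v h + cv (ip \<pi> (cv 1) h)" for h
    by (simp add: L_def algebra_simps Bm_mult)
  have key: "ip \<pi> (cv 1) (L *v h) = ip \<pi> (cv 1) h" for h
    by (simp add: L ip_add_right ip_diff_right ip_one_P ip_cv_right pi_sum)
  have "inj ((*v) L)"
  proof (rule injI)
    fix a b assume ab: "L *v a = L *v b"
    define d where "d = a - b"
    have Ld: "L *v d = 0" using ab by (simp add: d_def matrix_vector_mult_diff_distrib)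
    then have c0: "ip \<pi> (cv 1) d = 0" using key[of d] by (simp add: ip_def)
    then have "d - P *v d = 0" using Ld by (simp add: L)
    then have "P *v d = d" by simp
    then have "d = cv (d $ x)" for x using harmonic_const[OF irr] by blast
    then obtain c where dc: "d = cv c" by blast
    then have "c = 0" using c0 by (simp add: ip_cv_right pi_sum)
    then show "a = b" using dc by (simp add: d_def vec_eq_iff)
  qed
  then have "surj ((*v) L)"
    by (rule linear_inj_imp_surj[OF matrix_vector_mul_linear])
  then obtain h where h: "L *v h = g" by (metis surjD)
  then have h0: "ip \<pi> (cv 1) h = 0" using key[of h] g by simp
  then show ?thesis using h by (intro exI[of _ h]) (simp add: L)
qed

end

context revmc begin
lemma mpow_bound: "\<bar>(mpow P k *v v) $ x\<bar> \<le> (\<Sum>y\<in>UNIV. \<bar>v $ y\<bar>)"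
proof -
  have "\<bar>(mpow P k *v v) $ x\<bar> \<le> (\<Sum>y\<in>UNIV. \<bar>mpow P k $ x $ y * v $ y\<bar>)"
    by (simp add: matrix_vector_mult_def sum_abs)
  also have "\<dots> \<le> (\<Sum>y\<in>UNIV. \<bar>v $ y\<bar>)"
  proof (rule sum_mono)
    fix y
    have "\<bar>mpow P k $ x $ y * v $ y\<bar> = mpow P k $ x $ y * \<bar>v $ y\<bar>"
      using mpow_nonneg by (simp add: abs_mult)
    also have "\<dots> \<le> 1 * \<bar>v $ y\<bar>" by (rule mult_right_mono) (auto simp: mpow_le1)
    finally show "\<bar>mpow P k $ x $ y * v $ y\<bar> \<le> \<bar>v $ y\<bar>" by simp
  qed
  finally show ?thesis .
qed

lemma ip_mpow_bound: "\<bar>ip \<pi> g (mpow P k *v v)\<bar> \<le> (\<Sum>x\<in>UNIV. \<pi> x * \<bar>g $ x\<bar>) * (\<Sum>y\<in>UNIV. \<bar>v $ y\<bar>)"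
proof -
  have "\<bar>ip \<pi> g (mpow P k *v v)\<bar> \<le> (\<Sum>x\<in>UNIV. \<bar>\<pi> x * g $ x * (mpow P k *v v) $ x\<bar>)"
    unfolding ip_def by (rule sum_abs)
  also have "\<dots> \<le> (\<Sum>x\<in>UNIV. \<pi> x * \<bar>g $ x\<bar> * (\<Sum>y\<in>UNIV. \<bar>v $ y\<bar>))"
  proof (rule sum_mono)
    fix x
    have "\<bar>\<pi> x * g $ x * (mpow P k *v v) $ x\<bar> = (\<pi> x * \<bar>g $ x\<bar>) * \<bar>(mpow P k *v v) $ x\<bar>"
      using pi_pos[of x] by (simp add: abs_mult)
    also have "\<dots> \<le> (\<pi> x * \<bar>g $ x\<bar>) * (\<Sum>y\<in>UNIV. \<bar>v $ y\<bar>)"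
      by (rule mult_left_mono[OF mpow_bound]) (use pi_pos[of x] in simp)
    finally show "\<bar>\<pi> x * g $ x * (mpow P k *v v) $ x\<bar> \<le> \<pi> x * \<bar>g $ x\<bar> * (\<Sum>y\<in>UNIV. \<bar>v $ y\<bar>)" .
  qed
  also have "\<dots> = (\<Sum>x\<in>UNIV. \<pi> x * \<bar>g $ x\<bar>) * (\<Sum>y\<in>UNIV. \<bar>v $ y\<bar>)"
    by (simp add: sum_distrib_right)
  finally show ?thesis .
qed

lemma dd_sum_Suc:
  "(\<Sum>i<Suc N. \<Sum>j<Suc N. a (dd i j)) = (\<Sum>i<N. \<Sum>j<N. a (dd i j)) + 2 * (\<Sum>k<Suc N. a k) - (a 0 :: real)"
proof -
  have r: "(\<Sum>j<Suc N. a (N - j)) = (\<Sum>k<Suc N. a k)"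
    using sum.nat_diff_reindex[of "\<lambda>k. a k" "Suc N"] by simp
  have "(\<Sum>i<Suc N. \<Sum>j<Suc N. a (dd i j)) = (\<Sum>i<N. \<Sum>j<N. a (dd i j)) + (\<Sum>i<N. a (dd i N)) + (\<Sum>j<Suc N. a (dd N j))"
    by (simp add: sum.distrib)
  also have "(\<Sum>i<N. a (dd i N)) = (\<Sum>i<N. a (N - i))" by (intro sum.cong) (auto simp: dd_def)
  also have "\<dots> = (\<Sum>j<Suc N. a (N - j)) - a 0" by simp
  also have "(\<Sum>j<Suc N. a (dd N j)) = (\<Sum>j<Suc N. a (N - j))" by (intro sum.cong) (auto simp: dd_def)
  finally show ?thesis unfolding r by simp
qed

lemma asym_formula:
  fixes f :: "'n \<Rightarrow> real"
  assumes irr: "irreducible_tm P"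
  defines "m \<equiv> (\<Sum>x\<in>UNIV. \<pi> x * f x)"
  defines "g \<equiv> (\<chi> x. f x) - cv m"
  assumes h: "h - P *v h = g"
  shows "asym_var f P \<pi> = 2 * ip \<pi> g h - ip \<pi> g g"
proof -
  have g1: "ip \<pi> (cv 1) g = 0"
    by (simp add: ip_def g_def m_def algebra_simps sum_subtractf sum_distrib_right[symmetric] pi_sum)
  define h0 where "h0 = h - cv (ip \<pi> (cv 1) h)"
  have h0: "h0 - P *v h0 = g" using h by (simp add: h0_def matrix_vector_mult_diff_distrib P_cv)
  have h01: "ip \<pi> (cv 1) h0 = 0" by (simp add: h0_def ip_diff_right ip_cv_right pi_sum)
  have gh0: "ip \<pi> g h0 = ip \<pi> g h"
  proof -
    have "(\<Sum>x\<in>UNIV. \<pi> x * g $ x) = 0" using g1 by (simp add: ip_def)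
    then show ?thesis by (simp add: h0_def ip_diff_right ip_cv_right)
  qed
  obtain h' where h': "h' - P *v h' = h0" using poisson[OF irr h01] by blast
  define a where "a k = ip \<pi> g (mpow P k *v g)" for k
  define C where "C = 2 * ip \<pi> g h0 - ip \<pi> g g"
  define b where "b N = ip \<pi> g (P *v h') - ip \<pi> g (mpow P (Suc N) *v h')" for N
  have tel: "(\<Sum>k<N. a k) = ip \<pi> g h0 - ip \<pi> g (mpow P N *v h0)" for N
  proof (induction N)
    case 0 then show ?case by simp
  next
    case (Suc N)
    have "a N = ip \<pi> g (mpow P N *v h0) - ip \<pi> g (mpow P (Suc N) *v h0)"
      by (simp add: a_def h0[symmetric] matrix_vector_mult_diff_distrib ip_diff_right matrix_vector_mul_assoc)
    then show ?case using Suc by simp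
  qed
  have ph: "ip \<pi> g (mpow P k *v h0) = ip \<pi> g (mpow P k *v h') - ip \<pi> g (mpow P (Suc k) *v h')" for k
    by (simp add: h'[symmetric] matrix_vector_mult_diff_distrib ip_diff_right matrix_vector_mul_assoc)
  have S: "(\<Sum>i<N. \<Sum>j<N. a (dd i j)) = N * C - 2 * b N" for N
  proof (induction N)
    case 0 then show ?case by (simp add: b_def)
  next
    case (Suc N)
    have "a 0 = ip \<pi> g g" by (simp add: a_def)
    then show ?case using Suc unfolding dd_sum_Suc tel ph b_def C_def
      by (simp add: algebra_simps)
  qed
  have psv: "partial_sum_var f P \<pi> N = N * C - 2 * b N" for N
    using psv_formula[of f N] S[of N] unfolding a_def g_def m_def by simp
  define K where "K = (\<Sum>x\<in>UNIV. \<pi> x * \<bar>g $ x\<bar>) * (\<Sum>y\<in>UNIV. \<bar>h' $ y\<bar>)"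
  have bb: "\<bar>b N\<bar> \<le> 2 * K" for N
  proof -
    have "\<bar>ip \<pi> g (mpow P (Suc 0) *v h')\<bar> \<le> K" "\<bar>ip \<pi> g (mpow P (Suc N) *v h')\<bar> \<le> K"
      unfolding K_def by (rule ip_mpow_bound)+
    then show ?thesis by (simp add: b_def)
  qed
  have z: "(\<lambda>N. 2 * b N / real N) \<longlonglongrightarrow> 0"
  proof (rule Lim_null_comparison)
    show "\<forall>\<^sub>F N in sequentially. norm (2 * b N / real N) \<le> 4 * K / real N"
    proof (rule always_eventually, rule allI)
      fix N
      have "2 * \<bar>b N\<bar> \<le> 4 * K" using bb[of N] by simp
      then have "2 * \<bar>b N\<bar> / real N \<le> 4 * K / real N" by (rule divide_right_mono) simp
      then show "norm (2 * b N / real N) \<le> 4 * K / real N" by (simp add: abs_mult)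
    qed
    show "(\<lambda>N. 4 * K / real N) \<longlonglongrightarrow> 0" by (rule lim_const_over_n)
  qed
  have "(\<lambda>N. C - 2 * b N / real N) \<longlonglongrightarrow> C - 0"
    by (intro tendsto_diff tendsto_const z)
  then have lim0: "(\<lambda>N. C - 2 * b N / real N) \<longlonglongrightarrow> C" by simp
  have "(\<lambda>N. partial_sum_var f P \<pi> N / real N) \<longlonglongrightarrow> C"
  proof (rule Lim_transform_eventually[OF lim0])
    show "\<forall>\<^sub>F N in sequentially. C - 2 * b N / real N = partial_sum_var f P \<pi> N / real N"
      using eventually_gt_at_top[of 0]
      by eventually_elim (simp add: psv field_simps)
  qed
  then have "asym_var f P \<pi> = C" unfolding asym_var_def by (rule limI)
  then show ?thesis by (simp add: C_def gh0)
qed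

end

context revmc begin

lemma psd: "0 \<le> ip \<pi> v (v - P *v v)"
  using ip_P_le[of v] by (simp add: ip_diff_right)

lemma variational:
  assumes h: "h - P *v h = g"
  shows "2 * ip \<pi> g u - ip \<pi> u (u - P *v u) \<le> ip \<pi> g h"
proof -
  have e1: "(u - h) - P *v (u - h) = (u - P *v u) - g"
    using h by (simp add: matrix_vector_mult_diff_distrib algebra_simps)
  have e2: "ip \<pi> h (u - P *v u) = ip \<pi> g u"
  proof -
    have "ip \<pi> h (u - P *v u) = ip \<pi> h u - ip \<pi> (P *v h) u"
      by (simp add: ip_diff_right ip_P_sym)
    also have "\<dots> = ip \<pi> (h - P *v h) u" by (simp add: ip_diff_left)
    finally show ?thesis using h by simp
  qed
  have "0 \<le> ip \<pi> (u - h) ((u - h) - P *v (u - h))" by (rule psd)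
  also have "\<dots> = ip \<pi> u (u - P *v u) - ip \<pi> u g - ip \<pi> h (u - P *v u) + ip \<pi> h g"
    unfolding e1 by (simp add: ip_diff_left ip_diff_right)
  also have "\<dots> = ip \<pi> u (u - P *v u) - 2 * ip \<pi> g u + ip \<pi> g h"
    unfolding e2 using ip_sym[of \<pi> u g] ip_sym[of \<pi> h g] by simp
  finally show ?thesis by simp
qed

end

lemma eff_iff:
  assumes P: "revmc P \<pi>" and Q: "revmc Q \<pi>"
    and iP: "irreducible_tm P" and iQ: "irreducible_tm Q"
  shows "efficiency_dominates P Q \<pi> \<longleftrightarrow> (\<forall>u. ip \<pi> u (P *v u) \<le> ip \<pi> u (Q *v u))"
proof
  assume dom: "efficiency_dominates P Q \<pi>"
  show "\<forall>u. ip \<pi> u (P *v u) \<le> ip \<pi> u (Q *v u)"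
  proof
    fix u :: "real^'a"
    define g where "g = u - Q *v u"
    define f where "f = (\<lambda>x. g $ x)"
    have g1: "ip \<pi> (cv 1) g = 0"
      using revmc.ip_one_P[OF Q, of u] by (simp add: g_def ip_diff_right)
    have m0: "(\<Sum>x\<in>UNIV. \<pi> x * f x) = 0" using g1 by (simp add: ip_def f_def)
    have gf: "(\<chi> x. f x) - cv (\<Sum>x\<in>UNIV. \<pi> x * f x) = g" unfolding m0 by (simp add: f_def vec_eq_iff)
    obtain hP where hP: "hP - P *v hP = g" using revmc.poisson[OF P iP g1] by blast
    have aP: "asym_var f P \<pi> = 2 * ip \<pi> g hP - ip \<pi> g g"
      using revmc.asym_formula[OF P iP, of hP f] hP unfolding gf by simp
    have aQ: "asym_var f Q \<pi> = 2 * ip \<pi> g u - ip \<pi> g g"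
      using revmc.asym_formula[OF Q iQ, of u f] unfolding gf g_def by simp
    have "asym_var f P \<pi> \<le> asym_var f Q \<pi>" using dom by (simp add: efficiency_dominates_def)
    then have "ip \<pi> g hP \<le> ip \<pi> g u" unfolding aP aQ by simp
    moreover have "2 * ip \<pi> g u - ip \<pi> u (u - P *v u) \<le> ip \<pi> g hP"
      by (rule revmc.variational[OF P hP])
    ultimately have "ip \<pi> g u \<le> ip \<pi> u (u - P *v u)" by simp
    moreover have "ip \<pi> g u = ip \<pi> u (u - Q *v u)" by (simp add: g_def ip_sym)
    ultimately show "ip \<pi> u (P *v u) \<le> ip \<pi> u (Q *v u)" by (simp add: ip_diff_right)
  qed
next
  assume le: "\<forall>u. ip \<pi> u (P *v u) \<le> ip \<pi> u (Q *v u)"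
  show "efficiency_dominates P Q \<pi>" unfolding efficiency_dominates_def
  proof
    fix f :: "'a \<Rightarrow> real"
    define g where "g = (\<chi> x. f x) - cv (\<Sum>x\<in>UNIV. \<pi> x * f x)"
    have g1: "ip \<pi> (cv 1) g = 0"
      by (simp add: ip_def g_def algebra_simps sum_subtractf sum_distrib_right[symmetric] revmc.pi_sum[OF P])
    obtain hP where hP: "hP - P *v hP = g" using revmc.poisson[OF P iP g1] by blast
    obtain hQ where hQ: "hQ - Q *v hQ = g" using revmc.poisson[OF Q iQ g1] by blast
    have aP: "asym_var f P \<pi> = 2 * ip \<pi> g hP - ip \<pi> g g"
      using revmc.asym_formula[OF P iP, of hP f] hP unfolding g_def by simp
    have aQ: "asym_var f Q \<pi> = 2 * ip \<pi> g hQ - ip \<pi> g g"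
      using revmc.asym_formula[OF Q iQ, of hQ f] hQ unfolding g_def by simp
    have v: "2 * ip \<pi> g hP - ip \<pi> hP (hP - Q *v hP) \<le> ip \<pi> g hQ"
      by (rule revmc.variational[OF Q hQ])
    have "ip \<pi> hP (hP - Q *v hP) \<le> ip \<pi> hP (hP - P *v hP)"
      using le[rule_format, of hP] by (simp add: ip_diff_right)
    also have "\<dots> = ip \<pi> g hP" using hP by (simp add: ip_sym)
    finally have "ip \<pi> g hP \<le> ip \<pi> g hQ" using v by simp
    then show "asym_var f P \<pi> \<le> asym_var f Q \<pi>" using aP aQ by simp
  qed
qed


definition bil :: "real^'n::finite^'n \<Rightarrow> real^'n \<Rightarrow> real^'n \<Rightarrow> real" where
  "bil K u v = (\<Sum>x\<in>UNIV. \<Sum>y\<in>UNIV. u$x * K$x$y * v$y)"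

lemma bil_add_left: "bil K (a + b) c = bil K a c + bil K b c"
  unfolding bil_def by (simp add: algebra_simps sum.distrib)
lemma bil_add_right: "bil K c (a + b) = bil K c a + bil K c b"
  unfolding bil_def by (simp add: algebra_simps sum.distrib)
lemma bil_scale_left: "bil K (t *\<^sub>R a) c = t * bil K a c"
  unfolding bil_def by (simp add: algebra_simps sum_distrib_left)
lemma bil_scale_right: "bil K c (t *\<^sub>R a) = t * bil K c a"
  unfolding bil_def by (simp add: algebra_simps sum_distrib_left)
lemma bil_sym: "(\<And>x y. K$x$y = K$y$x) \<Longrightarrow> bil K u v = bil K v u"
  unfolding bil_def by (subst sum.swap) (simp add: ac_simps)
lemma bil_zero[simp]: "bil K 0 v = 0" by (simp add: bil_def)

lemma quad_zero:
  fixes a b :: real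
  assumes "\<And>t. 0 \<le> a * t + b * t^2"
  shows "a = 0"
proof (rule ccontr)
  assume a: "a \<noteq> 0"
  define d where "d = \<bar>b\<bar> + 1"
  have d: "d > 0" by (simp add: d_def)
  define t where "t = - a / d"
  have "(a * t + b * t^2) * d^2 = a^2 * (b - d)"
    using d by (simp add: t_def field_simps power2_eq_square)
  moreover have "a^2 * (b - d) < 0"
    using a by (intro mult_pos_neg) (auto simp: d_def)
  moreover have "0 \<le> (a * t + b * t^2) * d^2" using assms[of t] by simp
  ultimately show False by linarith
qed

lemma eig_iff:
  fixes K M :: "real^'n::finite^'n" and w :: "'n \<Rightarrow> real"
  assumes sym: "\<And>x y. K$x$y = K$y$x" and wpos: "\<And>x. w x > 0"
    and KM: "\<And>x y. K$x$y = w x * M$x$y"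
  shows "eigenvalues_nonneg M \<longleftrightarrow> (\<forall>u. 0 \<le> bil K u u)"
proof
  have qfM: "bil K u v = (\<Sum>x\<in>UNIV. w x * u$x * (\<Sum>y\<in>UNIV. M$x$y * v$y))" for u v
    by (simp add: bil_def KM sum_distrib_left ac_simps)
  show "(\<forall>u. 0 \<le> bil K u u) \<Longrightarrow> eigenvalues_nonneg M"
    unfolding eigenvalues_nonneg_def is_eigenvalue_def
  proof (intro allI impI)
    fix c assume psd: "\<forall>u. 0 \<le> bil K u u"
    assume "\<exists>v. v \<noteq> 0 \<and> cmat M *v v = c *s v"
    then obtain v where v0: "v \<noteq> 0" and ev: "cmat M *v v = c *s v" by blast
    define a where "a = (\<chi> x. Re (v$x))"
    define b where "b = (\<chi> x. Im (v$x))"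
    have comp: "(\<Sum>y\<in>UNIV. complex_of_real (M$x$y) * v$y) = c * v$x" for x
      using ev by (simp add: vec_eq_iff cmat_def matrix_vector_mult_def)
    have eA: "(\<Sum>y\<in>UNIV. M$x$y * a$y) = Re c * a$x - Im c * b$x" for x
      using arg_cong[OF comp[of x], of Re] by (simp add: a_def b_def)
    have eB: "(\<Sum>y\<in>UNIV. M$x$y * b$y) = Re c * b$x + Im c * a$x" for x
      using arg_cong[OF comp[of x], of Im] by (simp add: a_def b_def)
    define s where "s = (\<Sum>x\<in>UNIV. w x * ((a$x)^2 + (b$x)^2))"
    obtain x0 where x0: "v$x0 \<noteq> 0" using v0 by (auto simp: vec_eq_iff)
    have "(a$x0)^2 + (b$x0)^2 > 0" using x0
      by (simp add: a_def b_def complex_eq_iff sum_power2_gt_zero_iff)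
    then have s: "s > 0" unfolding s_def
      by (intro sum_pos2[of UNIV x0]) (auto intro!: mult_pos_pos mult_nonneg_nonneg wpos less_imp_le[OF wpos])
    have "bil K a a + bil K b b = Re c * s"
      unfolding qfM eA eB s_def
      by (simp add: algebra_simps sum.distrib sum_distrib_left power2_eq_square sum_subtractf)
    then have re: "Re c \<ge> 0" using psd s
      by (metis add_nonneg_nonneg zero_le_mult_iff not_less)
    have "bil K b a = bil K a b" by (rule bil_sym[OF sym])
    then have "Im c * s = 0"
      unfolding qfM eA eB s_def
      by (simp add: algebra_simps sum.distrib sum_distrib_left power2_eq_square sum_subtractf)
    then have "Im c = 0" using s by simp
    then show "c \<in> \<real> \<and> 0 \<le> Re c" using re by (simp add: complex_is_Real_iff)
  qed
next
  assume evn: "eigenvalues_nonneg M"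
  show "\<forall>u. 0 \<le> bil K u u"
  proof (rule ccontr)
    assume "\<not> (\<forall>u. 0 \<le> bil K u u)"
    then obtain u1 where u1: "bil K u1 u1 < 0" by (auto simp: not_le)
    define W where "W u = (\<Sum>x\<in>UNIV. w x * (u$x)^2)" for u :: "real^'n"
    define R where "R u = bil K u u / W u" for u
    have Wpos: "W u > 0" if unz: "u \<noteq> 0" for u
    proof -
      obtain x0 where "u$x0 \<noteq> 0" using unz by (auto simp: vec_eq_iff)
      then show ?thesis unfolding W_def
        by (intro sum_pos2[of UNIV x0]) (auto intro!: mult_pos_pos mult_nonneg_nonneg less_imp_le[OF wpos] wpos)
    qed
    have Wsc: "W (t *\<^sub>R u) = t^2 * W u" for t u
      by (simp add: W_def sum_distrib_left power_mult_distrib ac_simps)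
    have Ksc: "bil K (t *\<^sub>R u) (t *\<^sub>R u) = t^2 * bil K u u" for t u
      by (simp add: bil_scale_left bil_scale_right power2_eq_square)
    have Rsc: "R (t *\<^sub>R u) = R u" if "t \<noteq> 0" for t u
      using that by (simp add: R_def Wsc Ksc)
    have S: "compact (sphere (0::real^'n) 1)" "sphere (0::real^'n) 1 \<noteq> {}" by simp_all
    have "continuous_on (sphere 0 1) R"
      unfolding R_def W_def bil_def
    proof (intro continuous_intros ballI)
      fix u :: "real^'n" assume "u \<in> sphere 0 1"
      then have "u \<noteq> 0" by auto
      then have "(\<Sum>x\<in>UNIV. w x * (u$x)^2) \<noteq> 0" using Wpos[of u] by (simp add: W_def)
      then show "(\<Sum>x\<in>UNIV. w x * (u$x)^2) \<noteq> 0" by simp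
    qed
    then obtain u0 where u0S: "u0 \<in> sphere 0 1" and u0min: "\<forall>u\<in>sphere 0 1. R u0 \<le> R u"
      using continuous_attains_inf[OF S] by blast
    define lam where "lam = R u0"
    have u0nz: "u0 \<noteq> 0" using u0S by auto
    have Rge: "lam \<le> R u" if "u \<noteq> 0" for u
    proof -
      have "(1 / norm u) *\<^sub>R u \<in> sphere 0 1" using that by simp
      then have "lam \<le> R ((1 / norm u) *\<^sub>R u)" using u0min by (simp add: lam_def)
      also have "\<dots> = R u" using that by (intro Rsc) simp
      finally show ?thesis .
    qed
    have lneg: "lam < 0"
    proof -
      have "u1 \<noteq> 0" using u1 by (auto simp: bil_def)
      then have "lam \<le> R u1" "W u1 > 0" using Rge Wpos by auto
      moreover have "R u1 < 0" using u1 \<open>W u1 > 0\<close> by (simp add: R_def divide_neg_pos)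
      ultimately show ?thesis by simp
    qed
    define KL where "KL = (\<chi> x y. K$x$y - (if x = y then lam * w x else 0))"
    have KLsym: "KL$x$y = KL$y$x" for x y by (simp add: KL_def sym)
    have KLe: "bil KL u u = bil K u u - lam * W u" for u
    proof -
      have "bil KL u u = (\<Sum>x\<in>UNIV. \<Sum>y\<in>UNIV. u$x * K$x$y * u$y) - (\<Sum>x\<in>UNIV. \<Sum>y\<in>UNIV. u$x * (if x = y then lam * w x else 0) * u$y)"
        by (simp add: bil_def KL_def algebra_simps sum_subtractf)
      also have "(\<Sum>x\<in>UNIV. \<Sum>y\<in>UNIV. u$x * (if x = y then lam * w x else 0) * u$y) = lam * W u"
        by (simp add: W_def sum_distrib_left power2_eq_square ac_simps if_distrib if_distribR cong: if_cong)
      finally show ?thesis by (simp add: bil_def)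
    qed
    have Phi: "bil KL u u \<ge> 0" for u
    proof (cases "u = 0")
      case True then show ?thesis by simp
    next
      case False
      then have "lam \<le> bil K u u / W u" "W u > 0" using Rge[of u] Wpos[of u] by (auto simp: R_def)
      then have "lam * W u \<le> bil K u u" by (simp add: pos_le_divide_eq)
      then show ?thesis by (simp add: KLe)
    qed
    have Phi0: "bil KL u0 u0 = 0"
      using Wpos[OF u0nz] by (simp add: KLe lam_def R_def)
    have D2: "2 * bil KL z u0 = 0" for z
    proof (rule quad_zero[where b="bil KL z z"])
      fix t :: real
      have "bil KL (u0 + t *\<^sub>R z) (u0 + t *\<^sub>R z) = bil KL u0 u0 + t * bil KL z u0 + t * bil KL u0 z + t^2 * bil KL z z"
        by (simp add: bil_add_left bil_add_right bil_scale_left bil_scale_right power2_eq_square algebra_simps)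
      also have "bil KL u0 z = bil KL z u0" by (rule bil_sym[OF KLsym])
      finally have "bil KL (u0 + t *\<^sub>R z) (u0 + t *\<^sub>R z) = 2 * bil KL z u0 * t + bil KL z z * t^2"
        using Phi0 by simp
      then show "0 \<le> 2 * bil KL z u0 * t + bil KL z z * t^2" using Phi by metis
    qed
    have D: "bil KL z u0 = 0" for z using D2[of z] by simp
    have evec: "(\<Sum>y\<in>UNIV. M$x$y * u0$y) = lam * u0$x" for x
    proof -
      define z where "z = (\<chi> x'. if x' = x then 1 else (0::real))"
      have "bil KL z u0 = (\<Sum>x'\<in>UNIV. z$x' * (\<Sum>y\<in>UNIV. KL$x'$y * u0$y))"
        unfolding bil_def by (simp add: mult.assoc sum_distrib_left)
      also have "\<dots> = (\<Sum>y\<in>UNIV. KL$x$y * u0$y)"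
        by (simp add: z_def if_distrib if_distribR cong: if_cong)
      also have "\<dots> = (\<Sum>y\<in>UNIV. K$x$y * u0$y - (if x = y then lam * w x * u0$y else 0))"
        by (intro sum.cong) (auto simp: KL_def algebra_simps)
      also have "\<dots> = (\<Sum>y\<in>UNIV. K$x$y * u0$y) - lam * w x * u0$x"
        by (simp add: sum_subtractf)
      also have "\<dots> = w x * ((\<Sum>y\<in>UNIV. M$x$y * u0$y) - lam * u0$x)"
        by (simp add: KM sum_distrib_left algebra_simps)
      finally have "w x * ((\<Sum>y\<in>UNIV. M$x$y * u0$y) - lam * u0$x) = 0" using D[of z] by simp
      then show ?thesis using wpos[of x] by simp
    qed
    define v where "v = (\<chi> x. complex_of_real (u0$x))"
    have "v \<noteq> 0" using u0nz by (auto simp: v_def vec_eq_iff)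
    moreover have "cmat M *v v = complex_of_real lam *s v"
    proof -
      have "(\<Sum>y\<in>UNIV. complex_of_real (M$x$y) * complex_of_real (u0$y)) = complex_of_real (lam * u0$x)" for x
        using evec[of x] by (metis (no_types, lifting) of_real_mult of_real_sum sum.cong)
      then show ?thesis by (simp add: vec_eq_iff cmat_def matrix_vector_mult_def v_def)
    qed
    ultimately have "is_eigenvalue M (complex_of_real lam)" unfolding is_eigenvalue_def by blast
    then have "lam \<ge> 0" using evn unfolding eigenvalues_nonneg_def by auto
    then show False using lneg by simp
  qed
qed


lemma diag_mult_nth: "(diag_mat \<pi> ** A) $ x $ y = \<pi> x * A $ x $ y"
  by (simp add: diag_mat_def matrix_matrix_mult_def if_distrib if_distribR cong: if_cong)

theorem theorem2:
  fixes P Q :: "real^'n::finite^'n" and \<pi> :: "'n \<Rightarrow> real"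
  assumes "prob_dist \<pi>"
    and "transition_matrix P" and "transition_matrix Q"
    and "irreducible_tm P" and "irreducible_tm Q"
    and "reversible P \<pi>" and "reversible Q \<pi>"
  shows "(efficiency_dominates P Q \<pi> \<longleftrightarrow> eigenvalues_nonneg (Q - P))
       \<and> (eigenvalues_nonneg (Q - P) \<longleftrightarrow> eigenvalues_nonneg (diag_mat \<pi> ** (Q - P)))"
proof -
  have RP: "revmc P \<pi>" and RQ: "revmc Q \<pi>" using assms by (auto simp: revmc_def)
  define K where "K = diag_mat \<pi> ** (Q - P)"
  have Kn: "K$x$y = \<pi> x * (Q - P)$x$y" for x y by (simp add: K_def diag_mult_nth)
  have sym: "K$x$y = K$y$x" for x y
    using revmc.P_rev[OF RP, of x y] revmc.P_rev[OF RQ, of x y] by (simp add: Kn algebra_simps)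
  have pos: "\<pi> x > 0" for x using revmc.pi_pos[OF RP] .
  have e1: "eigenvalues_nonneg (Q - P) \<longleftrightarrow> (\<forall>u. 0 \<le> bil K u u)"
    by (rule eig_iff[OF sym pos Kn])
  have e2: "eigenvalues_nonneg K \<longleftrightarrow> (\<forall>u. 0 \<le> bil K u u)"
    by (rule eig_iff[where w="\<lambda>_. 1", OF sym]) simp_all
  have bq: "bil K u u = ip \<pi> u (Q *v u) - ip \<pi> u (P *v u)" for u
    by (simp add: bil_def Kn ip_def matrix_vector_mult_def sum_distrib_left algebra_simps
        sum_subtractf)
  have e0: "efficiency_dominates P Q \<pi> \<longleftrightarrow> (\<forall>u. 0 \<le> bil K u u)"
    unfolding eff_iff[OF RP RQ assms(4,5)] bq by simp
  show ?thesis using e0 e1 e2 by (simp add: K_def)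
qed


end
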